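(* Let $\sigma_1,\sigma_2>0$, $\beta\in(0,1)$, $r\in(0,1)$ be fixed, and let $n\to\infty$ and $p\to\infty$ with $\log(n)/p\to0$. Set $\epsilon=n^{-\beta}$ and $A=\sqrt{2r\log n}$. Consider the testing problem for $n$ i.i.d. observations $\mathbf X_1,\dots,\mathbf X_n\in\mathbb R^p$: \[ H_0:\ \mathbf X_i\sim N(0\cdot\mathbf 1_p,\sigma_1^2\mathbf I_p),\qquad H_1:\ \mathbf X_i\sim(1-\epsilon)N(0\cdot\mathbf 1_p,\sigma_1^2\mathbf I_p)+\epsilon N(A\mathbf 1_p,\sigma_2^2\mathbf I_p),\quad 1\le i\le n. \] Then for the likelihood ratio test (rejecting $H_0$ when the likelihood ratio of $H_1$ to $H_0$ exceeds $1$), the sum of the type I and type II error probabilities tends to $0$.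
   Context: $\mathbf 1_p$ is the all-ones vector in $\mathbb R^p$ and $\mathbf I_p$ the $p\times p$ identity; both hypotheses are simple (all parameters known). *)

theory Defs
  imports "HOL-Probability.Probability"
begin

text \<open>Density of N(mu * 1_p, sigma^2 I_p) on R^p, with R^p represented by
  functions nat => real restricted to the index set {..<p}.\<close>
definition gauss_vec_density :: "nat \<Rightarrow> real \<Rightarrow> real \<Rightarrow> (nat \<Rightarrow> real) \<Rightarrow> real" where
  "gauss_vec_density p mu sd x = (\<Prod>j<p. normal_density mu sd (x j))"

definition obs_space :: "nat \<Rightarrow> (nat \<Rightarrow> real) measure" where
  "obs_space p = PiM {..<p} (\<lambda>_. lborel)"

definition sample_space :: "nat \<Rightarrow> nat \<Rightarrow> (nat \<Rightarrow> nat \<Rightarrow> real) measure" where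
  "sample_space n p = PiM {..<n} (\<lambda>_. obs_space p)"

definition lik0 :: "nat \<Rightarrow> nat \<Rightarrow> real \<Rightarrow> (nat \<Rightarrow> nat \<Rightarrow> real) \<Rightarrow> real" where
  "lik0 n p s1 X = (\<Prod>i<n. gauss_vec_density p 0 s1 (X i))"

definition lik1 :: "nat \<Rightarrow> nat \<Rightarrow> real \<Rightarrow> real \<Rightarrow> real \<Rightarrow> real \<Rightarrow> (nat \<Rightarrow> nat \<Rightarrow> real) \<Rightarrow> real" where
  "lik1 n p s1 s2 eps A X =
     (\<Prod>i<n. (1 - eps) * gauss_vec_density p 0 s1 (X i) + eps * gauss_vec_density p A s2 (X i))"

definition law0 where
  "law0 n p s1 = density (sample_space n p) (\<lambda>X. ennreal (lik0 n p s1 X))"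

definition law1 where
  "law1 n p s1 s2 eps A = density (sample_space n p) (\<lambda>X. ennreal (lik1 n p s1 s2 eps A X))"

definition lrt_reject where
  "lrt_reject n p s1 s2 eps A =
     {X \<in> space (sample_space n p). lik1 n p s1 s2 eps A X / lik0 n p s1 X > 1}"

definition lrt_total_error where
  "lrt_total_error n p s1 s2 eps A =
     measure (law0 n p s1) (lrt_reject n p s1 s2 eps A)
   + measure (law1 n p s1 s2 eps A) (space (sample_space n p) - lrt_reject n p s1 s2 eps A)"

end

theory Submission
  imports Defs "HOL-Real_Asymp.Real_Asymp"
begin

lemma exponent_identity:
  fixes s1 s2 A t S :: real
  assumes "s1 > 0" "s2 > 0" "S = s1^2 + s2^2"
  shows "-((t - 0)^2) / (2 * s1^2) + -((t - A)^2) / (2 * s2^2)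
      = 2 * (-(A^2) / (4 * S)) + 2 * (-((t - A * s1^2 / S)^2) / (2 * (2 * s1^2 * s2^2 / S)))"
proof -
  have S: "S > 0" using assms by (simp add: add_pos_pos)
  have "S \<noteq> 0" "s1 \<noteq> 0" "s2 \<noteq> 0" using S assms(1,2) by auto
  then show ?thesis
    apply (simp add: field_simps)
    apply (simp add: assms(3))
    apply algebra
    done
qed

lemma gauss_bc_pointwise:
  fixes s1 s2 A t :: real
  assumes "s1 > 0" "s2 > 0"
  shows "sqrt (normal_density 0 s1 t * normal_density A s2 t)
         \<le> exp (-(A^2) / (4 * (s1^2 + s2^2))) *
            normal_density (A * s1^2 / (s1^2 + s2^2)) (sqrt (2 * s1^2 * s2^2 / (s1^2 + s2^2))) t"
proof -
  define S where "S = s1^2 + s2^2"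
  define v where "v = 2 * s1^2 * s2^2 / S"
  define m where "m = A * s1^2 / S"
  have S: "S > 0" using assms by (simp add: S_def add_pos_pos)
  have v: "v > 0" using assms S by (simp add: v_def)
  have vle: "v \<le> s1 * s2"
  proof -
    have "2 * s1 * s2 \<le> S" unfolding S_def using sum_squares_bound[of s1 s2] by simp
    then have "2 * s1^2 * s2^2 \<le> s1 * s2 * S"
      using assms by (simp add: power2_eq_square)
    then show ?thesis unfolding v_def using S by (simp add: divide_le_eq mult.commute)
  qed
  have ex: "-((t - 0)^2) / (2 * s1^2) + -((t - A)^2) / (2 * s2^2)
      = 2 * (-(A^2) / (4 * S)) + 2 * (-((t - m)^2) / (2 * (sqrt v)^2))"
    using exponent_identity[OF assms S_def, of t A] v unfolding m_def v_def by simp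
  have lhs: "normal_density 0 s1 t * normal_density A s2 t
      = (1 / (2 * pi * (s1 * s2))) * exp (-((t - 0)^2) / (2 * s1^2) + -((t - A)^2) / (2 * s2^2))"
    using assms unfolding normal_density_def exp_add
    by (simp add: real_sqrt_mult power2_eq_square field_simps)
  have rhs: "(exp (-(A^2) / (4 * S)) * normal_density m (sqrt v) t)^2
      = (1 / (2 * pi * v)) * exp (2 * (-(A^2) / (4 * S)) + 2 * (-((t - m)^2) / (2 * (sqrt v)^2)))"
  proof -
    have e2: "\<And>x::real. (exp x)^2 = exp (2*x)" unfolding power2_eq_square mult_2 exp_add ..
    have sq: "(1 / sqrt (2 * pi * (sqrt v)\<^sup>2))^2 = 1 / (2 * pi * v)"
      using v by (simp add: power_divide)
    show ?thesis unfolding normal_density_def power_mult_distrib e2 sq exp_add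
      by simp
  qed
  have "normal_density 0 s1 t * normal_density A s2 t \<le> (exp (-(A^2) / (4 * S)) * normal_density m (sqrt v) t)^2"
    unfolding lhs rhs ex
  proof (rule mult_right_mono)
    show "1 / (2 * pi * (s1 * s2)) \<le> 1 / (2 * pi * v)"
      using v vle assms by (intro divide_left_mono mult_left_mono) auto
  qed simp
  then have "sqrt (normal_density 0 s1 t * normal_density A s2 t) \<le> exp (-(A^2) / (4 * S)) * normal_density m (sqrt v) t"
    by (simp add: real_le_lsqrt normal_density_nonneg real_sqrt_le_iff) 
  then show ?thesis unfolding S_def m_def v_def .
qed

lemma sqrt_prod: "sqrt (prod f A) = (\<Prod>i\<in>A. sqrt (f i))"
  by (induction A rule: infinite_finite_induct) (auto simp: real_sqrt_mult)

lemma gvd_pos: "s > 0 \<Longrightarrow> gauss_vec_density p mu s x > 0"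
  unfolding gauss_vec_density_def by (intro prod_pos) (auto intro: normal_density_pos)

lemma gvd_nonneg: "gauss_vec_density p mu s x \<ge> 0"
  unfolding gauss_vec_density_def by (intro prod_nonneg) auto

lemma gvd_meas[measurable]: "gauss_vec_density p mu s \<in> borel_measurable (obs_space p)"
  unfolding gauss_vec_density_def[abs_def] obs_space_def by measurable

lemma nn_normal: "s > 0 \<Longrightarrow> (\<integral>\<^sup>+x. ennreal (normal_density mu s x) \<partial>lborel) = 1"
  by (subst nn_integral_eq_integral) auto

lemma bc1:
  fixes s1 s2 A :: real
  assumes "s1 > 0" "s2 > 0"
  shows "(\<integral>\<^sup>+t. ennreal (sqrt (normal_density 0 s1 t * normal_density A s2 t)) \<partial>lborel)
     \<le> ennreal (exp (-(A^2) / (4 * (s1^2 + s2^2))))"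
proof -
  define c where "c = exp (-(A^2) / (4 * (s1^2 + s2^2)))"
  define m where "m = A * s1^2 / (s1^2 + s2^2)"
  define s where "s = sqrt (2 * s1^2 * s2^2 / (s1^2 + s2^2))"
  have s: "s > 0" unfolding s_def using assms by (simp add: add_pos_pos)
  have "(\<integral>\<^sup>+t. ennreal (sqrt (normal_density 0 s1 t * normal_density A s2 t)) \<partial>lborel)
      \<le> (\<integral>\<^sup>+t. ennreal c * ennreal (normal_density m s t) \<partial>lborel)"
    apply (rule nn_integral_mono)
    using gauss_bc_pointwise[OF assms] unfolding c_def m_def s_def
    by (simp add: ennreal_mult'[symmetric] ennreal_leI)
  also have "\<dots> = ennreal c"
    by (simp add: nn_integral_cmult nn_normal[OF s])
  finally show ?thesis unfolding c_def .
qed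

interpretation lb: product_sigma_finite "\<lambda>_::nat. lborel :: real measure" by standard

lemma obs_sf: "sigma_finite_measure (obs_space p)"
  unfolding obs_space_def by (rule lb.sigma_finite) simp

interpretation ob: product_sigma_finite "\<lambda>_::nat. obs_space p"
  by (simp add: product_sigma_finite_def obs_sf)

lemma obs_one: "s > 0 \<Longrightarrow> (\<integral>\<^sup>+x. ennreal (gauss_vec_density p mu s x) \<partial>obs_space p) = 1"
proof -
  assume s: "s > 0"
  have "(\<integral>\<^sup>+x. ennreal (gauss_vec_density p mu s x) \<partial>obs_space p)
       = (\<integral>\<^sup>+x. (\<Prod>j\<in>{..<p}. ennreal (normal_density mu s (x j))) \<partial>obs_space p)"
    unfolding gauss_vec_density_def by (simp add: prod_ennreal)
  also have "\<dots> = (\<Prod>j\<in>{..<p}. (\<integral>\<^sup>+t. ennreal (normal_density mu s t) \<partial>lborel))"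
    unfolding obs_space_def by (rule lb.product_nn_integral_prod) auto
  also have "\<dots> = 1" using nn_normal[OF s] by simp
  finally show ?thesis .
qed

lemma obs_bc:
  fixes s1 s2 A :: real
  assumes "s1 > 0" "s2 > 0"
  shows "(\<integral>\<^sup>+x. ennreal (sqrt (gauss_vec_density p 0 s1 x * gauss_vec_density p A s2 x)) \<partial>obs_space p)
     \<le> ennreal (exp (-(A^2) / (4 * (s1^2 + s2^2))) ^ p)"
proof -
  have "(\<integral>\<^sup>+x. ennreal (sqrt (gauss_vec_density p 0 s1 x * gauss_vec_density p A s2 x)) \<partial>obs_space p)
       = (\<integral>\<^sup>+x. (\<Prod>j\<in>{..<p}. ennreal (sqrt (normal_density 0 s1 (x j) * normal_density A s2 (x j)))) \<partial>obs_space p)"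
    unfolding gauss_vec_density_def by (simp add: prod_ennreal sqrt_prod prod.distrib[symmetric])
  also have "\<dots> = (\<Prod>j\<in>{..<p}. (\<integral>\<^sup>+t. ennreal (sqrt (normal_density 0 s1 t * normal_density A s2 t)) \<partial>lborel))"
    unfolding obs_space_def by (rule lb.product_nn_integral_prod) auto
  also have "\<dots> \<le> (\<Prod>j\<in>{..<p}. ennreal (exp (-(A^2) / (4 * (s1^2 + s2^2)))))"
    by (rule prod_mono_ennreal) (rule bc1[OF assms])
  also have "\<dots> = ennreal (exp (-(A^2) / (4 * (s1^2 + s2^2))) ^ p)"
    by (simp add: ennreal_power)
  finally show ?thesis .
qed

interpretation sp: product_sigma_finite "\<lambda>_::nat. obs_space p"
  by (simp add: product_sigma_finite_def obs_sf)

lemma lik0_meas[measurable]: "lik0 n p s1 \<in> borel_measurable (sample_space n p)"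
  unfolding lik0_def[abs_def] sample_space_def by measurable

lemma lik1_meas[measurable]: "lik1 n p s1 s2 eps A \<in> borel_measurable (sample_space n p)"
  unfolding lik1_def[abs_def] sample_space_def by measurable

lemma obs_mix:
  fixes s1 s2 A eps :: real
  assumes "s1 > 0" "s2 > 0" "0 \<le> eps" "eps \<le> 1"
  shows "(\<integral>\<^sup>+x. ennreal (sqrt (gauss_vec_density p 0 s1 x *
            ((1 - eps) * gauss_vec_density p 0 s1 x + eps * gauss_vec_density p A s2 x))) \<partial>obs_space p)
     \<le> ennreal (sqrt (1 - eps) + sqrt eps * exp (-(A^2) / (4 * (s1^2 + s2^2))) ^ p)"
proof -
  let ?f = "gauss_vec_density p 0 s1" and ?g = "gauss_vec_density p A s2"
  have "(\<integral>\<^sup>+x. ennreal (sqrt (?f x * ((1 - eps) * ?f x + eps * ?g x))) \<partial>obs_space p)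
     \<le> (\<integral>\<^sup>+x. ennreal (sqrt (1 - eps)) * ennreal (?f x) + ennreal (sqrt eps) * ennreal (sqrt (?f x * ?g x)) \<partial>obs_space p)"
  proof (rule nn_integral_mono)
    fix x
    have f: "?f x \<ge> 0" "?g x \<ge> 0" by (auto intro: gvd_nonneg)
    have "sqrt (?f x * ((1 - eps) * ?f x + eps * ?g x)) = sqrt ((1 - eps) * (?f x)^2 + eps * (?f x * ?g x))"
      by (simp add: algebra_simps power2_eq_square)
    also have "\<dots> \<le> sqrt ((1 - eps) * (?f x)^2) + sqrt (eps * (?f x * ?g x))"
      using f assms by (intro sqrt_add_le_add_sqrt) auto
    also have "\<dots> = sqrt (1 - eps) * ?f x + sqrt eps * sqrt (?f x * ?g x)"
      using f by (simp add: real_sqrt_mult)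
    finally show "ennreal (sqrt (?f x * ((1 - eps) * ?f x + eps * ?g x)))
        \<le> ennreal (sqrt (1 - eps)) * ennreal (?f x) + ennreal (sqrt eps) * ennreal (sqrt (?f x * ?g x))"
      using f assms by (simp add: ennreal_mult'[symmetric] ennreal_plus[symmetric] ennreal_leI del: ennreal_plus)
  qed
  also have "\<dots> = ennreal (sqrt (1 - eps)) * (\<integral>\<^sup>+x. ennreal (?f x) \<partial>obs_space p)
      + ennreal (sqrt eps) * (\<integral>\<^sup>+x. ennreal (sqrt (?f x * ?g x)) \<partial>obs_space p)"
    by (subst nn_integral_add) (auto simp: nn_integral_cmult)
  also have "\<dots> \<le> ennreal (sqrt (1 - eps)) * 1
      + ennreal (sqrt eps) * ennreal (exp (-(A^2) / (4 * (s1^2 + s2^2))) ^ p)"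
    using obs_one[OF assms(1)] obs_bc[OF assms(1,2)]
    by (intro add_mono mult_left_mono) auto
  also have "\<dots> = ennreal (sqrt (1 - eps) + sqrt eps * exp (-(A^2) / (4 * (s1^2 + s2^2))) ^ p)"
    using assms by (simp add: ennreal_mult'[symmetric] ennreal_plus[symmetric] del: ennreal_plus)
  finally show ?thesis .
qed

lemma sample_bc:
  fixes s1 s2 A eps :: real
  assumes "s1 > 0" "s2 > 0" "0 \<le> eps" "eps \<le> 1"
  shows "(\<integral>\<^sup>+X. ennreal (sqrt (lik0 n p s1 X * lik1 n p s1 s2 eps A X)) \<partial>sample_space n p)
     \<le> ennreal ((sqrt (1 - eps) + sqrt eps * exp (-(A^2) / (4 * (s1^2 + s2^2))) ^ p) ^ n)"
proof -
  let ?f = "gauss_vec_density p 0 s1" and ?g = "gauss_vec_density p A s2"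
  let ?h = "\<lambda>x. ennreal (sqrt (?f x * ((1 - eps) * ?f x + eps * ?g x)))"
  have nn: "\<And>x. 0 \<le> (1 - eps) * ?f x + eps * ?g x" using assms gvd_nonneg by (intro add_nonneg_nonneg mult_nonneg_nonneg) auto
  have "(\<integral>\<^sup>+X. ennreal (sqrt (lik0 n p s1 X * lik1 n p s1 s2 eps A X)) \<partial>sample_space n p)
      = (\<integral>\<^sup>+X. (\<Prod>i\<in>{..<n}. ?h (X i)) \<partial>sample_space n p)"
    unfolding lik0_def lik1_def using nn gvd_nonneg
    by (simp add: prod_ennreal sqrt_prod prod.distrib[symmetric] real_sqrt_mult)
  also have "\<dots> = (\<Prod>i\<in>{..<n}. (\<integral>\<^sup>+x. ?h x \<partial>obs_space p))"
    unfolding sample_space_def by (rule ob.product_nn_integral_prod) auto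
  also have "\<dots> \<le> (\<Prod>i\<in>{..<n}. ennreal (sqrt (1 - eps) + sqrt eps * exp (-(A^2) / (4 * (s1^2 + s2^2))) ^ p))"
    by (rule prod_mono_ennreal) (rule obs_mix[OF assms])
  also have "\<dots> = ennreal ((sqrt (1 - eps) + sqrt eps * exp (-(A^2) / (4 * (s1^2 + s2^2))) ^ p) ^ n)"
    using assms by (simp add: ennreal_power del: ennreal_plus)
  finally show ?thesis .
qed

lemma lik0_pos: "s1 > 0 \<Longrightarrow> lik0 n p s1 X > 0"
  unfolding lik0_def by (intro prod_pos) (auto intro: gvd_pos)

lemma lik1_nonneg: "0 \<le> eps \<Longrightarrow> eps \<le> 1 \<Longrightarrow> lik1 n p s1 s2 eps A X \<ge> 0"
  unfolding lik1_def by (intro prod_nonneg add_nonneg_nonneg mult_nonneg_nonneg) (auto intro: gvd_nonneg)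

lemma error_bound:
  fixes s1 s2 A eps :: real
  assumes "s1 > 0" "s2 > 0" "0 \<le> eps" "eps \<le> 1"
  shows "lrt_total_error n p s1 s2 eps A
     \<le> (sqrt (1 - eps) + sqrt eps * exp (-(A^2) / (4 * (s1^2 + s2^2))) ^ p) ^ n"
proof -
  define M where "M = sample_space n p"
  define L0 where "L0 = lik0 n p s1"
  define L1 where "L1 = lik1 n p s1 s2 eps A"
  define R where "R = lrt_reject n p s1 s2 eps A"
  define b where "b = (sqrt (1 - eps) + sqrt eps * exp (-(A^2) / (4 * (s1^2 + s2^2))) ^ p) ^ n"
  have b: "b \<ge> 0" unfolding b_def using assms by simp
  have [measurable]: "L0 \<in> borel_measurable M" "L1 \<in> borel_measurable M"
    unfolding L0_def L1_def M_def by measurable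
  have R: "R \<in> sets M"
  proof -
    have "R = {X \<in> space M. L1 X / L0 X > 1}"
      unfolding R_def lrt_reject_def M_def L0_def L1_def ..
    also have "\<dots> \<in> sets M" by measurable
    finally show ?thesis .
  qed
  have e0: "emeasure (law0 n p s1) R = (\<integral>\<^sup>+X. indicator R X * ennreal (L0 X) \<partial>M)"
    unfolding law0_def using R by (simp add: emeasure_density M_def L0_def nn_integral_set_ennreal mult.commute)
  have e1: "emeasure (law1 n p s1 s2 eps A) (space M - R) = (\<integral>\<^sup>+X. indicator (space M - R) X * ennreal (L1 X) \<partial>M)"
    unfolding law1_def using R by (subst emeasure_density) (auto simp: M_def L1_def mult.commute)
  have "emeasure (law0 n p s1) R + emeasure (law1 n p s1 s2 eps A) (space M - R)
      = (\<integral>\<^sup>+X. indicator R X * ennreal (L0 X) + indicator (space M - R) X * ennreal (L1 X) \<partial>M)"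
    unfolding e0 e1 using R by (subst nn_integral_add) auto
  also have "\<dots> \<le> (\<integral>\<^sup>+X. ennreal (sqrt (L0 X * L1 X)) \<partial>M)"
  proof (rule nn_integral_mono)
    fix X assume X: "X \<in> space M"
    have p0: "L0 X > 0" unfolding L0_def using assms lik0_pos by blast
    have p1: "L1 X \<ge> 0" unfolding L1_def using assms lik1_nonneg by blast
    show "indicator R X * ennreal (L0 X) + indicator (space M - R) X * ennreal (L1 X) \<le> ennreal (sqrt (L0 X * L1 X))"
    proof (cases "X \<in> R")
      case True
      then have "L1 X / L0 X > 1" unfolding R_def lrt_reject_def L0_def L1_def by simp
      then have "L0 X \<le> L1 X" using p0 by (simp add: less_divide_eq)
      then have "sqrt (L0 X * L0 X) \<le> sqrt (L0 X * L1 X)"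
        using p0 by (intro real_sqrt_le_mono mult_left_mono) auto
      then show ?thesis using True p0 by (simp add: ennreal_leI)
    next
      case False
      then have "\<not> L1 X / L0 X > 1" using X unfolding R_def lrt_reject_def L0_def L1_def M_def by simp
      then have "L1 X \<le> L0 X" using p0 by (simp add: divide_le_eq)
      then have "sqrt (L1 X * L1 X) \<le> sqrt (L0 X * L1 X)"
        using p1 by (intro real_sqrt_le_mono mult_right_mono) auto
      then show ?thesis using False X p1 by (simp add: ennreal_leI)
    qed
  qed
  also have "\<dots> \<le> ennreal b"
    unfolding M_def L0_def L1_def b_def by (rule sample_bc[OF assms])
  finally have tot: "emeasure (law0 n p s1) R + emeasure (law1 n p s1 s2 eps A) (space M - R) \<le> ennreal b" .
  then have f0: "emeasure (law0 n p s1) R < top" and f1: "emeasure (law1 n p s1 s2 eps A) (space M - R) < top"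
    by (auto simp: top_unique less_top[symmetric] dest: order.strict_trans1[OF _ ennreal_less_top])
  have "lrt_total_error n p s1 s2 eps A
      = enn2real (emeasure (law0 n p s1) R + emeasure (law1 n p s1 s2 eps A) (space M - R))"
    unfolding lrt_total_error_def measure_def R_def[symmetric] M_def[symmetric]
    using f0 f1 by (simp add: enn2real_plus)
  also have "\<dots> \<le> enn2real (ennreal b)"
    using tot by (intro enn2real_mono) auto
  also have "\<dots> = b" using b by simp
  finally show ?thesis unfolding b_def .
qed

lemma lim_aux:
  fixes \<beta> :: real assumes "\<beta> < 1"
  shows "((\<lambda>x::real. exp (-(x powr (1-\<beta>)) / 4)) \<longlongrightarrow> 0) at_top"
proof -
  have c: "1 - \<beta> > 0" using assms by simp
  define c' where "c' = 1 - \<beta>"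
  have "c' > 0" using c c'_def by simp
  then have "((\<lambda>x::real. exp (-(x powr c') / 4)) \<longlongrightarrow> 0) at_top" by real_asymp
  then show ?thesis unfolding c'_def .
qed

lemma base_bound:
  fixes N P :: nat and s1 s2 \<beta> r :: real
  assumes N: "N \<ge> 16" and "s1 > 0" "s2 > 0" "0 < \<beta>" "\<beta> < 1" "r > 0"
    and P: "real P * r \<ge> 2 * (s1^2 + s2^2)"
  shows "(sqrt (1 - real N powr (-\<beta>)) + sqrt (real N powr (-\<beta>)) *
           exp (-((sqrt (2 * r * ln (real N)))^2) / (4 * (s1^2 + s2^2))) ^ P) ^ N
         \<le> exp (-(real N powr (1-\<beta>)) / 4)"
proof -
  define S where "S = s1^2 + s2^2"
  define eps where "eps = real N powr (-\<beta>)"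
  have S: "S > 0" unfolding S_def using assms by (simp add: add_pos_pos)
  have N1: "real N \<ge> 1" using N by simp
  have lnN: "ln (real N) \<ge> 0" using N1 by simp
  have "1 \<le> real N powr \<beta>" using N1 assms by (simp add: ge_one_powr_ge_zero)
  then have eps0: "eps \<ge> 0" "eps \<le> 1" unfolding eps_def
    by (auto simp: powr_minus divide_simps)
  have A2: "(sqrt (2 * r * ln (real N)))^2 = 2 * r * ln (real N)"
    using lnN assms by simp
  have "exp (-((sqrt (2 * r * ln (real N)))^2) / (4 * S)) ^ P
      = exp (real P * (-(2 * r * ln (real N)) / (4 * S)))"
    unfolding A2 exp_of_nat_mult ..
  also have "\<dots> \<le> exp (- ln (real N))"
  proof -
    have "real P * (2 * r * ln (real N)) / (4 * S) \<ge> ln (real N)"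
    proof -
      have "real P * r / (2 * S) \<ge> 1" using P S unfolding S_def by (simp add: field_simps)
      then have "ln (real N) * 1 \<le> ln (real N) * (real P * r / (2 * S))"
        using lnN by (intro mult_left_mono) auto
      moreover have "ln (real N) * (real P * r / (2 * S)) = real P * (2 * r * ln (real N)) / (4 * S)"
        using S by (simp add: field_simps)
      ultimately show ?thesis by linarith
    qed
    moreover have "real P * (-(2 * r * ln (real N)) / (4 * S)) = -(real P * (2 * r * ln (real N)) / (4 * S))"
      by simp
    ultimately have "real P * (-(2 * r * ln (real N)) / (4 * S)) \<le> - ln (real N)" by linarith
    then show ?thesis by (simp only: exp_le_cancel_iff)
  qed
  also have "\<dots> = 1 / real N" using N1 by (simp add: exp_minus inverse_eq_divide)
  finally have e: "exp (-((sqrt (2 * r * ln (real N)))^2) / (4 * (s1^2 + s2^2))) ^ P \<le> 1 / real N"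
    unfolding S_def .
  have se: "sqrt eps = real N powr (-\<beta>/2)"
    unfolding eps_def using powr_half_sqrt_powr[of "real N" "-\<beta>"] by simp
  have key: "sqrt eps * (1 / real N) \<le> eps / 4"
  proof -
    have "4 \<le> sqrt (real N)" using N by (intro real_le_rsqrt) simp
    also have "sqrt (real N) = real N powr (1/2)" by (simp add: powr_half_sqrt)
    also have "\<dots> \<le> real N powr (1 - \<beta>/2)" using N1 assms by (intro powr_mono) auto
    finally have "4 * real N powr (-\<beta>/2 - 1) \<le> real N powr (1 - \<beta>/2) * real N powr (-\<beta>/2 - 1)"
      by (intro mult_right_mono) auto
    also have "\<dots> = eps" unfolding eps_def by (simp flip: powr_add)
    finally have "4 * real N powr (-\<beta>/2 - 1) \<le> eps" .
    moreover have "sqrt eps * (1 / real N) = real N powr (-\<beta>/2 - 1)"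
      unfolding se using N1 by (simp add: powr_diff powr_one)
    ultimately show ?thesis by simp
  qed
  have s1e: "sqrt (1 - eps) \<le> 1 - eps / 2"
  proof -
    have "1 - eps \<le> (1 - eps/2)^2" by (simp add: power2_eq_square algebra_simps)
    then show ?thesis using eps0 by (simp add: real_le_lsqrt real_sqrt_le_iff)
  qed
  have base: "sqrt (1 - eps) + sqrt eps * exp (-((sqrt (2 * r * ln (real N)))^2) / (4 * (s1^2 + s2^2))) ^ P
      \<le> 1 - eps / 4"
  proof -
    have "sqrt eps * exp (-((sqrt (2 * r * ln (real N)))^2) / (4 * (s1^2 + s2^2))) ^ P \<le> sqrt eps * (1 / real N)"
      using e eps0 by (intro mult_left_mono) auto
    then show ?thesis using key s1e by linarith
  qed
  have "(sqrt (1 - eps) + sqrt eps * exp (-((sqrt (2 * r * ln (real N)))^2) / (4 * (s1^2 + s2^2))) ^ P) ^ N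
      \<le> (1 - eps / 4) ^ N"
    using base eps0 by (intro power_mono) auto
  also have "\<dots> \<le> exp (- eps / 4) ^ N"
    using eps0 exp_ge_add_one_self[of "- eps / 4"] by (intro power_mono) auto
  also have "\<dots> = exp (real N * (- eps / 4))" by (rule exp_of_nat_mult[symmetric])
  also have "real N * (- eps / 4) = -(real N powr (1-\<beta>)) / 4"
  proof -
    have "real N powr (1-\<beta>) = real N powr 1 * real N powr (-\<beta>)"
      by (metis diff_conv_add_uminus powr_add)
    then show ?thesis unfolding eps_def using N1 by simp
  qed
  finally show ?thesis unfolding eps_def .
qed

theorem theorem2p8:
  fixes \<sigma>1 \<sigma>2 \<beta> r :: real and n p :: "nat \<Rightarrow> nat"
  assumes "\<sigma>1 > 0" "\<sigma>2 > 0" "0 < \<beta>" "\<beta> < 1" "0 < r" "r < 1"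
    and "filterlim n at_top sequentially" "filterlim p at_top sequentially"
    and "(\<lambda>k. ln (real (n k)) / real (p k)) \<longlonglongrightarrow> 0"
  shows "(\<lambda>k. lrt_total_error (n k) (p k) \<sigma>1 \<sigma>2
            (real (n k) powr (-\<beta>)) (sqrt (2 * r * ln (real (n k)))))
         \<longlonglongrightarrow> 0"
proof -
  define g where "g = (\<lambda>k. exp (-(real (n k) powr (1-\<beta>)) / 4))"
  have rn: "filterlim (\<lambda>k. real (n k)) at_top sequentially"
    by (rule filterlim_compose[OF filterlim_real_sequentially assms(7)])
  have gl: "g \<longlonglongrightarrow> 0" unfolding g_def
    by (rule filterlim_compose[OF lim_aux[OF assms(4)] rn])
  define P0 where "P0 = nat \<lceil>2 * (\<sigma>1^2 + \<sigma>2^2) / r\<rceil>"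
  have ev1: "eventually (\<lambda>k. n k \<ge> 16) sequentially"
    using assms(7) by (simp add: filterlim_at_top)
  have ev2: "eventually (\<lambda>k. p k \<ge> P0) sequentially"
    using assms(8) by (simp add: filterlim_at_top)
  have epsb: "\<And>k. n k \<ge> 16 \<Longrightarrow> 0 \<le> real (n k) powr (-\<beta>) \<and> real (n k) powr (-\<beta>) \<le> 1"
  proof -
    fix k assume "n k \<ge> 16"
    then have N1: "real (n k) \<ge> 1" by simp
    have "1 \<le> real (n k) powr \<beta>" using N1 assms by (simp add: ge_one_powr_ge_zero)
    then show "0 \<le> real (n k) powr (-\<beta>) \<and> real (n k) powr (-\<beta>) \<le> 1"
      by (auto simp: powr_minus divide_simps)
  qed
  have lo: "\<And>k. 0 \<le> lrt_total_error (n k) (p k) \<sigma>1 \<sigma>2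
            (real (n k) powr (-\<beta>)) (sqrt (2 * r * ln (real (n k))))"
    by (simp add: lrt_total_error_def)
  have h1: "eventually (\<lambda>k. 0 \<le> lrt_total_error (n k) (p k) \<sigma>1 \<sigma>2
            (real (n k) powr (-\<beta>)) (sqrt (2 * r * ln (real (n k))))) sequentially"
    using lo by simp
  have h2: "eventually (\<lambda>k. lrt_total_error (n k) (p k) \<sigma>1 \<sigma>2
            (real (n k) powr (-\<beta>)) (sqrt (2 * r * ln (real (n k)))) \<le> g k) sequentially"
    using ev1 ev2
  proof eventually_elim
    case (elim k)
    have Pk: "real (p k) * r \<ge> 2 * (\<sigma>1^2 + \<sigma>2^2)"
    proof -
      have "2 * (\<sigma>1^2 + \<sigma>2^2) / r \<le> real P0" unfolding P0_def by linarith
      also have "\<dots> \<le> real (p k)" using elim by simp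
      finally show ?thesis using assms(5) by (simp add: divide_le_eq)
    qed
    have "lrt_total_error (n k) (p k) \<sigma>1 \<sigma>2 (real (n k) powr (-\<beta>)) (sqrt (2 * r * ln (real (n k))))
      \<le> (sqrt (1 - real (n k) powr (-\<beta>)) + sqrt (real (n k) powr (-\<beta>)) *
           exp (-((sqrt (2 * r * ln (real (n k))))^2) / (4 * (\<sigma>1^2 + \<sigma>2^2))) ^ p k) ^ n k"
      using epsb[OF elim(1)] by (intro error_bound assms(1,2)) auto
    also have "\<dots> \<le> g k" unfolding g_def
      by (rule base_bound[OF elim(1) assms(1-5) Pk])
    finally show ?case .
  qed
  show ?thesis by (rule tendsto_sandwich[OF h1 h2 tendsto_const gl])
qed

end
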